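(* Let $f:[a,b]\to\mathbb{R}$ be twice differentiable with $|f''|\leq M$ on $[a,b]$. For all $\alpha\in f'([a,b])$ and all $x\in[a,b]$ such that $\|x\alpha+f(a)-a\alpha\|>M(b-a)^2$, we have \[ \lfloor f(x)\rfloor=\lfloor x\alpha+f(a)-a\alpha\rfloor. \]
   Context: $\|y\|$ denotes the distance from $y$ to the nearest integer; $\lfloor\cdot\rfloor$ is the floor function. *)

theory Defs
  imports Complex_Main
begin

definition dist_nearest_int :: "real \<Rightarrow> real" where
  "dist_nearest_int y = (INF k::int. \<bar>y - of_int k\<bar>)"

end

theory Submission
  imports Defs "HOL-Analysis.Analysis"
begin

lemma dni_le: "dist_nearest_int y \<le> \<bar>y - of_int k\<bar>"
  unfolding dist_nearest_int_def
  by (rule cINF_lower) (auto intro: bdd_belowI[where m=0])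

lemma floor_close:
  fixes y z :: real
  assumes "\<bar>z - y\<bar> < dist_nearest_int y"
  shows "\<lfloor>z\<rfloor> = \<lfloor>y\<rfloor>"
proof (rule ccontr)
  assume ne: "\<lfloor>z\<rfloor> \<noteq> \<lfloor>y\<rfloor>"
  show False
  proof (cases "\<lfloor>z\<rfloor> < \<lfloor>y\<rfloor>")
    case True
    have "z < of_int \<lfloor>y\<rfloor>" using True by (metis floor_less_iff)
    moreover have "of_int \<lfloor>y\<rfloor> \<le> y" by simp
    ultimately have "\<bar>y - of_int \<lfloor>y\<rfloor>\<bar> \<le> \<bar>z - y\<bar>" by linarith
    with dni_le[of y "\<lfloor>y\<rfloor>"] assms show False by linarith
  next
    case False
    hence "\<lfloor>y\<rfloor> + 1 \<le> \<lfloor>z\<rfloor>" using ne by linarith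
    hence "of_int (\<lfloor>y\<rfloor> + 1) \<le> z" by (metis le_floor_iff)
    moreover have "y < of_int (\<lfloor>y\<rfloor> + 1)" by linarith
    ultimately have "\<bar>y - of_int (\<lfloor>y\<rfloor> + 1)\<bar> \<le> \<bar>z - y\<bar>" by linarith
    with dni_le[of y "\<lfloor>y\<rfloor> + 1"] assms show False by linarith
  qed
qed

theorem lemma10:
  fixes f f' f'' :: "real \<Rightarrow> real" and a b M :: real
  assumes f_deriv: "\<And>x. x \<in> {a..b} \<Longrightarrow> (f has_real_derivative f' x) (at x within {a..b})"
    and f'_deriv: "\<And>x. x \<in> {a..b} \<Longrightarrow> (f' has_real_derivative f'' x) (at x within {a..b})"
    and bound: "\<And>x. x \<in> {a..b} \<Longrightarrow> \<bar>f'' x\<bar> \<le> M"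
  shows "\<forall>\<alpha> \<in> f' ` {a..b}. \<forall>x \<in> {a..b}.
           dist_nearest_int (x * \<alpha> + f a - a * \<alpha>) > M * (b - a)^2 \<longrightarrow>
           \<lfloor>f x\<rfloor> = \<lfloor>x * \<alpha> + f a - a * \<alpha>\<rfloor>"
proof (intro ballI impI)
  fix \<alpha> x
  assume "\<alpha> \<in> f' ` {a..b}" and x: "x \<in> {a..b}"
    and d: "dist_nearest_int (x * \<alpha> + f a - a * \<alpha>) > M * (b - a)^2"
  then obtain c where c: "c \<in> {a..b}" and al: "\<alpha> = f' c" by auto
  have ab: "a \<le> b" using x by auto
  have M0: "0 \<le> M" using bound[OF c] by linarith
  have B1: "\<bar>f' y - \<alpha>\<bar> \<le> M * (b - a)" if y: "y \<in> {a..b}" for y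
  proof -
    have "norm (f' y - f' c) \<le> M * norm (y - c)"
      by (rule field_differentiable_bound[OF convex_real_interval(5) f'_deriv _ y c])
         (use bound in auto)
    also have "\<dots> \<le> M * (b - a)" using y c M0 by (intro mult_left_mono) auto
    finally show ?thesis using al by simp
  qed
  define g where "g y = f y - y * \<alpha>" for y
  have gd: "(g has_real_derivative (f' y - \<alpha>)) (at y within {a..b})" if "y \<in> {a..b}" for y
    unfolding g_def using f_deriv[OF that]
    by (auto intro!: derivative_eq_intros)
  have "norm (g x - g a) \<le> (M * (b - a)) * norm (x - a)"
    by (rule field_differentiable_bound[OF convex_real_interval(5) gd _ x])
       (use B1 ab in auto)
  also have "\<dots> \<le> (M * (b - a)) * (b - a)" using x M0 ab by (intro mult_left_mono) auto
  finally have "\<bar>f x - (x * \<alpha> + f a - a * \<alpha>)\<bar> \<le> M * (b - a)^2"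
    by (simp add: g_def power2_eq_square algebra_simps)
  with d show "\<lfloor>f x\<rfloor> = \<lfloor>x * \<alpha> + f a - a * \<alpha>\<rfloor>"
    by (intro floor_close) linarith
qed

end
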